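(* If $d_Y\colon Y\times Y\to\mathcal{V}$ is a $\mathcal{V}$-category (i.e. $k\sqsubseteq d_Y(y,y)$ and $d_Y(y_1,y_2)\otimes d_Y(y_2,y_3)\sqsubseteq d_Y(y_1,y_3)$ for all $y,y_1,y_2,y_3\in Y$), then for every function $f\colon X\to Y$, \[\{q\circ f\mid q\in\gamma_Y(d_Y)\}\;=\;\gamma_X(d_Y\circ(f\times f)),\] i.e. $\gamma$ is natural when restricted to $\mathcal{V}$-categories.
   Context: $\mathcal{V}$ is a quantale: a complete lattice $(\mathcal{V},\sqsubseteq)$ with a commutative monoid structure $(\mathcal{V},\otimes,k)$ such that $\otimes$ preserves arbitrary joins in each argument; $d_\mathcal{V}(a,-)$ denotes the right adjoint of $a\otimes -$ (residuation). Write $\bigwedge$ for meets in the order $\sqsubseteq$. For a set $X$ and $S\subseteq\mathcal{V}^X$, $\alpha_X(S)(x_1,x_2)=\bigwedge_{p\in S} d_\mathcal{V}(p(x_1),p(x_2))$; for $d_X\colon X\times X\to\mathcal{V}$, $\gamma_X(d_X)=\{p\colon X\to\mathcal{V}\mid d_X(x_1,x_2)\sqsubseteq d_\mathcal{V}(p(x_1),p(x_2))\text{ for all }x_1,x_2\}$. *)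

theory Defs
  imports Main
begin

definition quantale :: "('v::complete_lattice \<Rightarrow> 'v \<Rightarrow> 'v) \<Rightarrow> 'v \<Rightarrow> bool" where
  "quantale tensor k \<longleftrightarrow>
     (\<forall>a b c. tensor (tensor a b) c = tensor a (tensor b c)) \<and>
     (\<forall>a b. tensor a b = tensor b a) \<and>
     (\<forall>a. tensor k a = a) \<and>
     (\<forall>a A. tensor a (Sup A) = Sup (tensor a ` A)) \<and>
     (\<forall>a A. tensor (Sup A) a = Sup ((\<lambda>b. tensor b a) ` A))"

text \<open>Residuation d_V(a,-): the right adjoint of a \<otimes> -, given by
  d_V(a,b) = Sup {c. a \<otimes> c \<le> b}.\<close>
definition resid :: "('v::complete_lattice \<Rightarrow> 'v \<Rightarrow> 'v) \<Rightarrow> 'v \<Rightarrow> 'v \<Rightarrow> 'v" where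
  "resid tensor a b = Sup {c. tensor a c \<le> b}"

definition gammaV :: "('v::complete_lattice \<Rightarrow> 'v \<Rightarrow> 'v) \<Rightarrow> ('x \<Rightarrow> 'x \<Rightarrow> 'v) \<Rightarrow> ('x \<Rightarrow> 'v) set" where
  "gammaV tensor d = {p. \<forall>x1 x2. d x1 x2 \<le> resid tensor (p x1) (p x2)}"

definition Vcat :: "('v::complete_lattice \<Rightarrow> 'v \<Rightarrow> 'v) \<Rightarrow> 'v \<Rightarrow> ('y \<Rightarrow> 'y \<Rightarrow> 'v) \<Rightarrow> bool" where
  "Vcat tensor k d \<longleftrightarrow> (\<forall>y. k \<le> d y y) \<and>
     (\<forall>y1 y2 y3. tensor (d y1 y2) (d y2 y3) \<le> d y1 y3)"

end

theory Submission
  imports Defs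
begin

lemma q_mono:
  assumes q: "quantale tensor k" and "(a::'v::complete_lattice) \<le> b"
  shows "tensor c a \<le> tensor c b"
proof -
  have "b = Sup {a, b}" using assms(2) by (simp add: sup.absorb2)
  then have "tensor c b = Sup (tensor c ` {a, b})" using q unfolding quantale_def by metis
  then show ?thesis by (simp add: le_iff_sup)
qed

lemma q_adj:
  assumes q: "quantale tensor k"
  shows "(c \<le> resid tensor a b) = (tensor a c \<le> (b::'v::complete_lattice))"
proof
  assume "c \<le> resid tensor a b"
  then have "tensor a c \<le> tensor a (Sup {c. tensor a c \<le> b})"
    using q_mono[OF q] unfolding resid_def by blast
  also have "\<dots> = Sup (tensor a ` {c. tensor a c \<le> b})" using q unfolding quantale_def by metis
  also have "\<dots> \<le> b" by (auto intro: Sup_least)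
  finally show "tensor a c \<le> b" .
next
  assume "tensor a c \<le> b"
  then show "c \<le> resid tensor a b" unfolding resid_def by (auto intro: Sup_upper)
qed

theorem mainTheorem5:
  fixes tensor :: "'v::complete_lattice \<Rightarrow> 'v \<Rightarrow> 'v" and k :: 'v
    and dY :: "'y \<Rightarrow> 'y \<Rightarrow> 'v" and f :: "'x \<Rightarrow> 'y"
  assumes "quantale tensor k"
    and "Vcat tensor k dY"
  shows "(\<lambda>q. q \<circ> f) ` gammaV tensor dY = gammaV tensor (\<lambda>x1 x2. dY (f x1) (f x2))"
proof
  show "(\<lambda>q. q \<circ> f) ` gammaV tensor dY \<subseteq> gammaV tensor (\<lambda>x1 x2. dY (f x1) (f x2))"
    unfolding gammaV_def by auto
next
  note Q = assms(1)
  have assoc: "\<And>a b c. tensor (tensor a b) c = tensor a (tensor b c)"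
    and comm: "\<And>a b. tensor a b = tensor b a"
    and unit: "\<And>a. tensor k a = a"
    and supl: "\<And>a A. tensor (Sup A) a = Sup ((\<lambda>b. tensor b a) ` A)"
    using Q unfolding quantale_def by auto
  have refl: "\<And>y. k \<le> dY y y" and tr: "\<And>y1 y2 y3. tensor (dY y1 y2) (dY y2 y3) \<le> dY y1 y3"
    using assms(2) unfolding Vcat_def by auto
  show "gammaV tensor (\<lambda>x1 x2. dY (f x1) (f x2)) \<subseteq> (\<lambda>q. q \<circ> f) ` gammaV tensor dY"
  proof
    fix p assume "p \<in> gammaV tensor (\<lambda>x1 x2. dY (f x1) (f x2))"
    then have hp: "\<And>x1 x2. tensor (p x1) (dY (f x1) (f x2)) \<le> p x2"
      unfolding gammaV_def using q_adj[OF Q] by blast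
    define q where "q y = Sup (range (\<lambda>x. tensor (p x) (dY (f x) y)))" for y
    have "p = q \<circ> f"
    proof
      fix x
      have "p x = tensor (p x) k" using unit comm by metis
      also have "\<dots> \<le> tensor (p x) (dY (f x) (f x))" using q_mono[OF Q refl] .
      also have "\<dots> \<le> q (f x)" unfolding q_def by (rule Sup_upper) auto
      finally have "p x \<le> q (f x)" .
      moreover have "q (f x) \<le> p x" unfolding q_def using hp by (auto intro: Sup_least)
      ultimately show "p x = (q \<circ> f) x" by simp
    qed
    moreover have "q \<in> gammaV tensor dY"
      unfolding gammaV_def
    proof (intro CollectI allI)
      fix y1 y2
      have "tensor (q y1) (dY y1 y2) = Sup ((\<lambda>b. tensor b (dY y1 y2)) ` range (\<lambda>x. tensor (p x) (dY (f x) y1)))"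
        unfolding q_def by (rule supl)
      also have "\<dots> \<le> q y2" unfolding q_def
      proof (rule Sup_least, clarify)
        fix x
        have "tensor (tensor (p x) (dY (f x) y1)) (dY y1 y2) = tensor (p x) (tensor (dY (f x) y1) (dY y1 y2))"
          by (rule assoc)
        also have "\<dots> \<le> tensor (p x) (dY (f x) y2)" using q_mono[OF Q tr] .
        also have "\<dots> \<le> Sup (range (\<lambda>x. tensor (p x) (dY (f x) y2)))" by (rule Sup_upper) auto
        finally show "tensor (tensor (p x) (dY (f x) y1)) (dY y1 y2) \<le> Sup (range (\<lambda>x. tensor (p x) (dY (f x) y2)))" .
      qed
      finally show "dY y1 y2 \<le> resid tensor (q y1) (q y2)" using q_adj[OF Q] by blast
    qed
    ultimately show "p \<in> (\<lambda>q. q \<circ> f) ` gammaV tensor dY" by blast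
  qed
qed

end
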